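(* Assume the sparsity setting below with $1<p\le2$. Let $(c^\ast,s^\ast)\in X\times Y$, $u^\ast=B(c^\ast,s^\ast)$, let $c^\ast$ be a $\Phi_p$-minimizing solution, and let $u_\delta\in Z$, $s_{\mathrm{mod},\epsilon}\in Y$ with $\|u^\ast-u_\delta\|\le\delta$, $\|s^\ast-s_{\mathrm{mod},\epsilon}\|\le\epsilon$. Assume the source condition: there is $\omega\in Z$ with $(\xi_{c^\ast},\xi_{s^\ast})=B'(c^\ast,s^\ast)^\ast\omega$ for some $(\xi_{c^\ast},\xi_{s^\ast})=:\xi^\ast\in\partial\tilde{\mathcal{R}}(c^\ast,s^\ast)$, where $B'(c^\ast,s^\ast)(x,y)=B(c^\ast,y)+B(x,s^\ast)$; and the smallness condition $C\|\omega\|<\min\{1,\gamma/(2\alpha_{\max})\}$ for some $0<\alpha_{\max}<\infty$. For $0<\alpha\le\alpha_{\max}$ let $(c^\alpha,s^\alpha)$ be a minimizer of $J^{u_\delta,s_{\mathrm{mod},\epsilon}}_{\alpha,\nu_1\alpha,\nu_2\alpha}$. If $\alpha\sim\delta+\epsilon$ (i.e., $m(\delta+\epsilon)\le\alpha\le M(\delta+\epsilon)$ for constants $0<m\le M$), then as $\delta+\epsilon\to0$ $$\|B(c^\alpha,s^\alpha)-B(c^\ast,s^\ast)\|=\mathcal{O}(\delta+\epsilon),\qquad D^{\xi^\ast}_{\tilde{\mathcal{R}}}((c^\alpha,s^\alpha),(c^\ast,s^\ast))=\mathcal{O}(\delta+\epsilon).$$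
   Context: Sparsity setting: $X,Y,Z$ are Hilbert spaces; $X\times Y$ carries the inner product $\langle (c_1,s_1),(c_2,s_2)\rangle=\langle c_1,c_2\rangle_X+\langle s_1,s_2\rangle_Y$. $B:X\times Y\to Z$ is bilinear, satisfies $\|B(c,s)\|_Z\le C\|c\|_X\|s\|_Y$ for some $C>0$, and is sequentially weak-weak continuous. $Y_n\subset Y$ is a finite-dimensional subspace, $P:Y\to Y_n$ is linear and bounded, $s_{\mathrm{calib}}\in Y_n$. $\mathcal{R}_s:Y\to[0,\infty)$ is proper, convex and weakly lower semi-continuous. $\{\varphi_i\}_{i\in\mathbb{N}}$ is an orthonormal basis of $X$, weights satisfy $1\le w_i<\infty$, and $\Phi_p(c)=\sum_iw_i|\langle c,\varphi_i\rangle|^p$. Fix $\gamma>0$ and $\nu_1,\nu_2\in(0,\infty)$. For $u\in Z$, $s_m\in Y$, $\alpha,\beta,\mu>0$: $J^{u,s_m}_{\alpha,\beta,\mu}(c,s)=\frac12\|B(c,s)-u\|^2+\frac{\gamma}{2}\|s-s_m\|^2+\frac{\mu}{2}\|P(s)-s_{\mathrm{calib}}\|^2+\alpha\Phi_p(c)+\beta\mathcal{R}_s(s)$, and $\tilde{\mathcal{R}}(c,s)=\Phi_p(c)+\frac{\nu_2}{2}\|P(s)-s_{\mathrm{calib}}\|^2+\nu_1\mathcal{R}_s(s)$ (so $J^{u,s_m}_{\alpha,\nu_1\alpha,\nu_2\alpha}=\frac12\|B(c,s)-u\|^2+\frac\gamma2\|s-s_m\|^2+\alpha\tilde{\mathcal{R}}$).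 $c^\ast$ is a $\Phi_p$-minimizing solution if $c^\ast\in\arg\min\{\Phi_p(c):B(c,s^\ast)=u^\ast\}$. For a convex functional $\mathcal{R}$ and $\xi\in\partial\mathcal{R}(x^\ast)$, $D^{\xi}_{\mathcal{R}}(x,x^\ast)=\mathcal{R}(x)-\mathcal{R}(x^\ast)-\langle\xi,x-x^\ast\rangle$. *)

theory Defs
  imports "HOL-Analysis.Analysis"
begin

definition weak_conv :: "(nat \<Rightarrow> 'a::real_inner) \<Rightarrow> 'a \<Rightarrow> bool" where
  "weak_conv xs x \<longleftrightarrow> (\<forall>v. (\<lambda>n. inner (xs n) v) \<longlonglongrightarrow> inner x v)"

definition weak_seq_cont :: "('a::real_inner \<Rightarrow> 'b::real_inner) \<Rightarrow> bool" where
  "weak_seq_cont f \<longleftrightarrow> (\<forall>xs x. weak_conv xs x \<longrightarrow> weak_conv (\<lambda>n. f (xs n)) (f x))"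

definition weak_lsc :: "('a::real_inner \<Rightarrow> real) \<Rightarrow> bool" where
  "weak_lsc R \<longleftrightarrow> (\<forall>xs x. weak_conv xs x \<longrightarrow> ereal (R x) \<le> liminf (\<lambda>n. ereal (R (xs n))))"

definition orthonormal_basis :: "(nat \<Rightarrow> 'a::real_inner) \<Rightarrow> bool" where
  "orthonormal_basis \<phi> \<longleftrightarrow>
     (\<forall>i j. inner (\<phi> i) (\<phi> j) = (if i = j then 1 else 0)) \<and> closure (span (range \<phi>)) = UNIV"

definition Phi :: "(nat \<Rightarrow> real) \<Rightarrow> (nat \<Rightarrow> 'a::real_inner) \<Rightarrow> real \<Rightarrow> 'a \<Rightarrow> ereal" where
  "Phi w \<phi> p c = (\<Sum>i. ereal (w i * \<bar>inner c (\<phi> i)\<bar> powr p))"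

definition Rtilde :: "(nat \<Rightarrow> real) \<Rightarrow> (nat \<Rightarrow> 'x::real_inner) \<Rightarrow> real \<Rightarrow> ('y::real_inner \<Rightarrow> 'y)
     \<Rightarrow> 'y \<Rightarrow> ('y \<Rightarrow> real) \<Rightarrow> real \<Rightarrow> real \<Rightarrow> 'x \<times> 'y \<Rightarrow> ereal" where
  "Rtilde w \<phi> p P scal Rs \<nu>1 \<nu>2 cs =
     Phi w \<phi> p (fst cs) + ereal (\<nu>2 / 2 * (norm (P (snd cs) - scal))\<^sup>2 + \<nu>1 * Rs (snd cs))"

definition Jfun :: "('x::real_inner \<Rightarrow> 'y::real_inner \<Rightarrow> 'z::real_inner) \<Rightarrow> real \<Rightarrow> ('y \<Rightarrow> 'y) \<Rightarrow> 'y
     \<Rightarrow> (nat \<Rightarrow> real) \<Rightarrow> (nat \<Rightarrow> 'x) \<Rightarrow> real \<Rightarrow> ('y \<Rightarrow> real)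
     \<Rightarrow> 'z \<Rightarrow> 'y \<Rightarrow> real \<Rightarrow> real \<Rightarrow> real \<Rightarrow> 'x \<times> 'y \<Rightarrow> ereal" where
  "Jfun B \<gamma> P scal w \<phi> p Rs u sm \<alpha> \<beta> \<mu> cs =
     ereal (1/2 * (norm (B (fst cs) (snd cs) - u))\<^sup>2 + \<gamma>/2 * (norm (snd cs - sm))\<^sup>2
            + \<mu>/2 * (norm (P (snd cs) - scal))\<^sup>2)
     + ereal \<alpha> * Phi w \<phi> p (fst cs) + ereal (\<beta> * Rs (snd cs))"

definition subdiff :: "('a::real_inner \<Rightarrow> ereal) \<Rightarrow> 'a \<Rightarrow> 'a set" where
  "subdiff R x = {\<xi>. R x \<noteq> \<infinity> \<and> (\<forall>y. R x + ereal (inner \<xi> (y - x)) \<le> R y)}"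

definition bregman :: "('a::real_inner \<Rightarrow> ereal) \<Rightarrow> 'a \<Rightarrow> 'a \<Rightarrow> 'a \<Rightarrow> ereal" where
  "bregman R \<xi> x xs = R x - R xs - ereal (inner \<xi> (x - xs))"

end

theory Submission
  imports Defs
begin

lemma span_range_nat:
  assumes "v \<in> span (range (\<phi>::nat \<Rightarrow> 'a::real_vector))"
  shows "\<exists>N. v \<in> span (\<phi> ` {..<N})"
proof -
  define T where "T = {v. \<exists>N. v \<in> span (\<phi> ` {..<N})}"
  have sub: "subspace T"
    unfolding subspace_def
  proof (intro conjI allI impI ballI)
    show "0 \<in> T" unfolding T_def using span_zero by blast
  next
    fix x y assume "x \<in> T" "y \<in> T"
    then obtain N1 N2 where "x \<in> span (\<phi> ` {..<N1})" "y \<in> span (\<phi> ` {..<N2})" unfolding T_def by auto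
    moreover have "span (\<phi> ` {..<N1}) \<subseteq> span (\<phi> ` {..<max N1 N2})"
      by (rule span_mono) auto
    moreover have "span (\<phi> ` {..<N2}) \<subseteq> span (\<phi> ` {..<max N1 N2})"
      by (rule span_mono) auto
    ultimately have "x + y \<in> span (\<phi> ` {..<max N1 N2})"
      by (intro span_add) auto
    then show "x + y \<in> T" unfolding T_def by blast
  next
    fix c x assume "x \<in> T"
    then obtain N where "x \<in> span (\<phi> ` {..<N})" unfolding T_def by auto
    then have "c *\<^sub>R x \<in> span (\<phi> ` {..<N})" by (rule span_mul)
    then show "c *\<^sub>R x \<in> T" unfolding T_def by blast
  qed
  have rng: "range \<phi> \<subseteq> T"
  proof
    fix x assume "x \<in> range \<phi>"
    then obtain i where "x = \<phi> i" by auto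
    then have "x \<in> span (\<phi> ` {..<Suc i})" by (intro span_base) auto
    then show "x \<in> T" unfolding T_def by blast
  qed
  have "span (range \<phi>) \<subseteq> T" by (rule span_minimal[OF rng sub])
  then show ?thesis using assms unfolding T_def by blast
qed

lemma parseval_le:
  fixes \<phi> :: "nat \<Rightarrow> 'a::real_inner"
  assumes on: "\<forall>i j. inner (\<phi> i) (\<phi> j) = (if i = j then 1 else 0)"
    and cl: "closure (span (range \<phi>)) = UNIV"
    and S: "\<forall>n. (\<Sum>i<n. (inner c (\<phi> i))\<^sup>2) \<le> S"
  shows "(norm c)\<^sup>2 \<le> S"
proof -
  have key: "(norm c)\<^sup>2 \<le> S + e\<^sup>2" if e: "e > 0" for e
  proof -
    have "c \<in> closure (span (range \<phi>))" using cl by auto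
    then obtain v where v: "v \<in> span (range \<phi>)" "dist v c < e"
      using e closure_approachable by blast
    obtain N where N: "v \<in> span (\<phi> ` {..<N})" using span_range_nat[OF v(1)] by blast
    define SN where "SN = (\<Sum>i<N. inner c (\<phi> i) *\<^sub>R \<phi> i)"
    have SNspan: "SN \<in> span (\<phi> ` {..<N})"
      unfolding SN_def by (intro span_sum span_mul span_base) auto
    have orth1: "inner (c - SN) (\<phi> j) = 0" if "j < N" for j
    proof -
      have "inner SN (\<phi> j) = (\<Sum>i<N. inner c (\<phi> i) * inner (\<phi> i) (\<phi> j))"
        unfolding SN_def by (simp add: inner_sum_left)
      also have "\<dots> = (\<Sum>i<N. if i = j then inner c (\<phi> j) else 0)"
        using on by (intro sum.cong) auto
      also have "\<dots> = inner c (\<phi> j)" using that by simp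
      finally show ?thesis by (simp add: inner_diff_left)
    qed
    have orth: "orthogonal (c - SN) a" if "a \<in> span (\<phi> ` {..<N})" for a
      by (rule orthogonal_to_span[OF that]) (auto simp: orthogonal_def orth1)
    have "inner c SN = (\<Sum>i<N. (inner c (\<phi> i))\<^sup>2)"
      unfolding SN_def by (simp add: inner_sum_right power2_eq_square)
    moreover have "inner (c - SN) SN = 0" using orth[OF SNspan] by (simp add: orthogonal_def)
    ultimately have nSN: "(norm SN)\<^sup>2 = (\<Sum>i<N. (inner c (\<phi> i))\<^sup>2)"
      by (simp add: power2_norm_eq_inner inner_diff_left)
    have "(norm c)\<^sup>2 = (norm (c - SN))\<^sup>2 + (norm SN)\<^sup>2"
      using norm_add_Pythagorean[OF orth[OF SNspan]] by simp
    moreover have "(norm (c - v))\<^sup>2 = (norm (c - SN))\<^sup>2 + (norm (SN - v))\<^sup>2"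
    proof -
      have "SN - v \<in> span (\<phi> ` {..<N})" using SNspan N by (rule span_diff)
      from norm_add_Pythagorean[OF orth[OF this]] show ?thesis by simp
    qed
    moreover have "norm (c - v) < e" using v(2) by (simp add: dist_norm norm_minus_commute)
    moreover have "(norm (c - v))\<^sup>2 \<le> e\<^sup>2" using calculation(3)
      by (intro power_mono) auto
    ultimately show ?thesis using nSN spec[OF S, of N] zero_le_power2[of "norm (SN - v)"] by linarith
  qed
  show ?thesis
  proof (rule ccontr)
    assume "\<not> ?thesis"
    then have pos: "0 < (norm c)\<^sup>2 - S" by simp
    define e where "e = sqrt (((norm c)\<^sup>2 - S) / 2)"
    have "e > 0" unfolding e_def using pos by simp
    have "e\<^sup>2 = ((norm c)\<^sup>2 - S) / 2" unfolding e_def using pos by simp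
    with key[OF \<open>e > 0\<close>] have k2: "(norm c)\<^sup>2 \<le> S + ((norm c)\<^sup>2 - S) / 2" by simp
    have aux: "\<And>a b::real. a \<le> b + (a - b) / 2 \<Longrightarrow> 0 < a - b \<Longrightarrow> False" by (simp add: field_simps)
    show False by (rule aux[OF k2 pos])
  qed
qed

lemma sq_add_ge:
  fixes a b :: "'a::real_inner"
  shows "(norm (a + b))\<^sup>2 \<ge> (norm a)\<^sup>2 - 2 * norm a * norm b"
proof -
  have "(norm (a + b))\<^sup>2 = (norm a)\<^sup>2 + 2 * inner a b + (norm b)\<^sup>2"
    by (simp add: power2_norm_eq_inner inner_add_left inner_add_right inner_commute)
  moreover have "- (norm a * norm b) \<le> inner a b"
    using Cauchy_Schwarz_ineq2[of a b] by linarith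
  ultimately show ?thesis using zero_le_power2[of "norm b"] by linarith
qed

lemma scalar_pow:
  fixes t Q p :: real
  assumes "1 < p" "p \<le> 2" "\<bar>t\<bar> powr p \<le> Q"
  shows "t\<^sup>2 \<le> (1 + Q) * \<bar>t\<bar> powr p"
proof (cases "\<bar>t\<bar> \<le> 1")
  case True
  have Q0: "0 \<le> Q" using assms(3) by (meson order_trans powr_ge_zero)
  have "t\<^sup>2 = \<bar>t\<bar> powr 2"
    by (cases "t = 0") (simp_all add: powr_numeral)
  also have "\<dots> \<le> \<bar>t\<bar> powr p"
    using True assms powr_mono'[of p 2 "\<bar>t\<bar>"] by simp
  also have "\<dots> \<le> (1 + Q) * \<bar>t\<bar> powr p" using Q0 by (simp add: mult_le_cancel_right1)
  finally show ?thesis .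
next
  case False
  have "t\<^sup>2 = \<bar>t\<bar> powr 2" using False by (simp add: powr_numeral)
  also have "\<dots> = \<bar>t\<bar> powr p * \<bar>t\<bar> powr (2 - p)" by (simp add: powr_add[symmetric])
  also have "\<bar>t\<bar> powr (2 - p) \<le> \<bar>t\<bar> powr p"
    using False assms by (intro powr_mono) auto
  then have "\<bar>t\<bar> powr p * \<bar>t\<bar> powr (2 - p) \<le> \<bar>t\<bar> powr p * Q"
    using assms(3) by (meson mult_left_mono order_trans powr_ge_zero)
  also have "\<dots> \<le> (1 + Q) * \<bar>t\<bar> powr p" by (simp add: algebra_simps)
  finally show ?thesis by simp
qed

lemma ab_le: "(a::real) * b \<le> a\<^sup>2 / 4 + b\<^sup>2"
proof -
  have "0 \<le> (a/2 - b)\<^sup>2" by simp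
  then show ?thesis by (simp add: power2_eq_square algebra_simps)
qed

lemma ab_le_g: assumes "(g::real) > 0" shows "(a::real) * b \<le> g * a\<^sup>2 / 8 + 2 * b\<^sup>2 / g"
proof -
  have "0 \<le> (g * a/4 - b)\<^sup>2" by simp
  then have "0 \<le> (g*a/4)\<^sup>2 - 2 * (g*a/4) * b + b\<^sup>2" by (simp add: power2_diff)
  then have "g * a * b / 2 \<le> g\<^sup>2 * a\<^sup>2 / 16 + b\<^sup>2" by (simp add: power2_eq_square algebra_simps)
  then have "(g * a * b / 2) * (2 / g) \<le> (g\<^sup>2 * a\<^sup>2 / 16 + b\<^sup>2) * (2/g)"
    using assms by (intro mult_right_mono) auto
  then show ?thesis using assms by (simp add: power2_eq_square field_simps)
qed
lemma w_nonneg: "\<forall>i. 1 \<le> w i \<Longrightarrow> 0 \<le> (w::nat\<Rightarrow>real) i"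
  by (meson order_trans zero_le_one)

lemma Phi_nonneg: assumes "\<forall>i. 1 \<le> w i" shows "0 \<le> Phi w \<phi> p c"
  unfolding Phi_def using w_nonneg[OF assms] by (intro suminf_0_le) simp

lemma Phi_partial:
  assumes "\<forall>i. 1 \<le> w i" "Phi w \<phi> p c = ereal q"
  shows "(\<Sum>i<n. w i * \<bar>inner c (\<phi> i)\<bar> powr p) \<le> q"
proof -
  have "(\<Sum>i<n. ereal (w i * \<bar>inner c (\<phi> i)\<bar> powr p)) \<le> Phi w \<phi> p c"
    unfolding Phi_def using w_nonneg[OF assms(1)] by (intro suminf_upper) simp
  then show ?thesis using assms(2) by (simp add: sum_ereal)
qed

lemma Phi_norm:
  fixes \<phi> :: "nat \<Rightarrow> 'a::real_inner"
  assumes onb: "orthonormal_basis \<phi>" and w: "\<forall>i. 1 \<le> w i" and p: "1 < p" "p \<le> 2"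
    and Ph: "Phi w \<phi> p c = ereal q" and qQ: "q \<le> Q"
  shows "(norm c)\<^sup>2 \<le> (1 + Q) * Q"
proof -
  have wpos: "0 \<le> w i" for i using w by (meson order_trans zero_le_one)
  have trm: "w i * \<bar>inner c (\<phi> i)\<bar> powr p \<le> q" for i
  proof -
    have "w i * \<bar>inner c (\<phi> i)\<bar> powr p = (\<Sum>j\<in>{i}. w j * \<bar>inner c (\<phi> j)\<bar> powr p)" by simp
    also have "\<dots> \<le> (\<Sum>j<Suc i. w j * \<bar>inner c (\<phi> j)\<bar> powr p)"
      using wpos by (intro sum_mono2) auto
    also have "\<dots> \<le> q" by (rule Phi_partial[OF w Ph])
    finally show ?thesis .
  qed
  have q0: "0 \<le> q" using Phi_nonneg[OF w, of \<phi> p c] Ph by simp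
  have bnd: "\<bar>inner c (\<phi> i)\<bar> powr p \<le> Q" for i
  proof -
    have "\<bar>inner c (\<phi> i)\<bar> powr p \<le> w i * \<bar>inner c (\<phi> i)\<bar> powr p"
      using w by (simp add: mult_le_cancel_right1)
    then show ?thesis using trm[of i] qQ by linarith
  qed
  have "\<forall>n. (\<Sum>i<n. (inner c (\<phi> i))\<^sup>2) \<le> (1 + Q) * Q"
  proof
    fix n
    have "(\<Sum>i<n. (inner c (\<phi> i))\<^sup>2) \<le> (\<Sum>i<n. (1 + Q) * (w i * \<bar>inner c (\<phi> i)\<bar> powr p))"
    proof (rule sum_mono)
      fix i
      have "(inner c (\<phi> i))\<^sup>2 \<le> (1 + Q) * \<bar>inner c (\<phi> i)\<bar> powr p"
        by (rule scalar_pow[OF p bnd])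
      also have "\<dots> \<le> (1 + Q) * (w i * \<bar>inner c (\<phi> i)\<bar> powr p)"
        using w q0 qQ by (intro mult_left_mono) (auto simp: mult_le_cancel_right1)
      finally show "(inner c (\<phi> i))\<^sup>2 \<le> (1 + Q) * (w i * \<bar>inner c (\<phi> i)\<bar> powr p)" .
    qed
    also have "\<dots> = (1 + Q) * (\<Sum>i<n. w i * \<bar>inner c (\<phi> i)\<bar> powr p)"
      by (simp add: sum_distrib_left)
    also have "\<dots> \<le> (1 + Q) * Q"
      using Phi_partial[OF w Ph, of n] q0 qQ by (intro mult_left_mono) auto
    finally show "(\<Sum>i<n. (inner c (\<phi> i))\<^sup>2) \<le> (1 + Q) * Q" .
  qed
  then show ?thesis using parseval_le onb unfolding orthonormal_basis_def by blast
qed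

theorem mainTheorem9:
  fixes B :: "'x::{real_inner,complete_space} \<Rightarrow> 'y::{real_inner,complete_space} \<Rightarrow> 'z::{real_inner,complete_space}"
    and C \<gamma> \<nu>1 \<nu>2 p \<alpha>max m M :: real
    and Yn :: "'y set" and P :: "'y \<Rightarrow> 'y" and scal :: 'y
    and Rs :: "'y \<Rightarrow> real" and \<phi> :: "nat \<Rightarrow> 'x" and w :: "nat \<Rightarrow> real"
    and cstar :: 'x and sstar :: 'y and ustar :: 'z and \<omega> :: 'z and \<xi>c :: 'x and \<xi>s :: 'y
  assumes B_bilinear: "bilinear B"
    and C_pos: "C > 0"
    and B_bound: "\<forall>c s. norm (B c s) \<le> C * norm c * norm s"
    and B_weak: "weak_seq_cont (\<lambda>cs. B (fst cs) (snd cs))"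
    and Yn_sub: "subspace Yn" and Yn_fin: "\<exists>S. finite S \<and> span S = Yn"
    and P_lin: "bounded_linear P" and P_range: "\<forall>y. P y \<in> Yn"
    and scal_in: "scal \<in> Yn"
    and Rs_nonneg: "\<forall>s. Rs s \<ge> 0" and Rs_convex: "convex_on UNIV Rs" and Rs_lsc: "weak_lsc Rs"
    and onb: "orthonormal_basis \<phi>"
    and w_ge1: "\<forall>i. 1 \<le> w i"
    and \<gamma>_pos: "\<gamma> > 0" and \<nu>1_pos: "\<nu>1 > 0" and \<nu>2_pos: "\<nu>2 > 0"
    and p_range: "1 < p" "p \<le> 2"
    and ustar_def: "ustar = B cstar sstar"
    and Phi_min: "\<forall>c. B c sstar = ustar \<longrightarrow> Phi w \<phi> p cstar \<le> Phi w \<phi> p c"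
    and xi_subdiff: "(\<xi>c, \<xi>s) \<in> subdiff (Rtilde w \<phi> p P scal Rs \<nu>1 \<nu>2) (cstar, sstar)"
    and source: "\<forall>x y. inner \<xi>c x + inner \<xi>s y = inner \<omega> (B cstar y + B x sstar)"
    and \<alpha>max_pos: "0 < \<alpha>max"
    and small: "C * norm \<omega> < min 1 (\<gamma> / (2 * \<alpha>max))"
    and m_pos: "0 < m" and m_le_M: "m \<le> M"
  shows "\<exists>K \<eta>. \<eta> > 0 \<and>
    (\<forall>\<delta> \<epsilon> u\<delta> smod \<alpha> c\<alpha> s\<alpha>.
       0 \<le> \<delta> \<and> 0 \<le> \<epsilon> \<and> \<delta> + \<epsilon> < \<eta> \<and>
       norm (ustar - u\<delta>) \<le> \<delta> \<and> norm (sstar - smod) \<le> \<epsilon> \<and>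
       0 < \<alpha> \<and> \<alpha> \<le> \<alpha>max \<and> m * (\<delta> + \<epsilon>) \<le> \<alpha> \<and> \<alpha> \<le> M * (\<delta> + \<epsilon>) \<and>
       (\<forall>c s. Jfun B \<gamma> P scal w \<phi> p Rs u\<delta> smod \<alpha> (\<nu>1 * \<alpha>) (\<nu>2 * \<alpha>) (c\<alpha>, s\<alpha>)
              \<le> Jfun B \<gamma> P scal w \<phi> p Rs u\<delta> smod \<alpha> (\<nu>1 * \<alpha>) (\<nu>2 * \<alpha>) (c, s))
       \<longrightarrow> norm (B c\<alpha> s\<alpha> - B cstar sstar) \<le> K * (\<delta> + \<epsilon>)
         \<and> bregman (Rtilde w \<phi> p P scal Rs \<nu>1 \<nu>2) (\<xi>c, \<xi>s) (c\<alpha>, s\<alpha>) (cstar, sstar)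
             \<le> ereal (K * (\<delta> + \<epsilon>)))"
proof -
  have wnn: "\<And>i. 0 \<le> w i" using w_nonneg[OF w_ge1] by blast
  let ?R = "Rtilde w \<phi> p P scal Rs \<nu>1 \<nu>2"
  have sd: "?R (cstar, sstar) \<noteq> \<infinity>"
    and sdi: "\<And>z. ?R (cstar,sstar) + ereal (inner (\<xi>c,\<xi>s) (z - (cstar,sstar))) \<le> ?R z"
    using xi_subdiff unfolding subdiff_def by auto
  have Phis0: "0 \<le> Phi w \<phi> p cstar" by (rule Phi_nonneg[OF w_ge1])
  have "Phi w \<phi> p cstar \<noteq> \<infinity>" using sd unfolding Rtilde_def by auto
  then obtain \<phi>s where phis: "Phi w \<phi> p cstar = ereal \<phi>s"
    using Phis0 by (cases "Phi w \<phi> p cstar") auto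
  have phis0: "0 \<le> \<phi>s" using Phis0 phis by simp
  define rs where "rs = \<phi>s + \<nu>2/2 * (norm (P sstar - scal))\<^sup>2 + \<nu>1 * Rs sstar"
  have Rts: "?R (cstar,sstar) = ereal rs" unfolding Rtilde_def rs_def using phis by simp
  have rsa: "0 \<le> \<nu>2/2 * (norm (P sstar - scal))\<^sup>2" using \<nu>2_pos by simp
  have rsb: "0 \<le> \<nu>1 * Rs sstar" using \<nu>1_pos Rs_nonneg by simp
  have rs_ge: "\<phi>s \<le> rs" unfolding rs_def using rsa rsb by linarith
  define Qb where "Qb = rs + (1+\<gamma>)/(2*m)"
  have Qb_ge: "rs \<le> Qb" unfolding Qb_def using \<gamma>_pos m_pos by simp
  have Qb0: "0 \<le> Qb" using Qb_ge rs_ge phis0 by linarith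
  define L where "L = sqrt ((1+Qb)*Qb)"
  have L0: "0 \<le> L" unfolding L_def using Qb0 by simp
  have normL: "norm c \<le> L" if "Phi w \<phi> p c = ereal q" "q \<le> Qb" for c q
    unfolding L_def by (rule real_le_rsqrt, rule Phi_norm[OF onb w_ge1 p_range that])
  have cstarL: "norm cstar \<le> L" using normL[OF phis] rs_ge Qb_ge by linarith
  define W where "W = norm \<omega>"
  have W0: "0 \<le> W" unfolding W_def by simp
  define K0 where "K0 = 1/2 + 5*\<gamma>/2 + (1 + M*W)\<^sup>2 + 8*(M*W*C*L)\<^sup>2/\<gamma>"
  have K00: "0 \<le> K0" unfolding K0_def using \<gamma>_pos by simp
  define K where "K = 1 + 4*K0 + K0/m"
  show ?thesis
  proof (rule exI[of _ K], rule exI[of _ 1], rule conjI)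
    show "(0::real) < 1" by simp
    show "\<forall>\<delta> \<epsilon> u\<delta> smod \<alpha> c\<alpha> s\<alpha>.
       0 \<le> \<delta> \<and> 0 \<le> \<epsilon> \<and> \<delta> + \<epsilon> < 1 \<and>
       norm (ustar - u\<delta>) \<le> \<delta> \<and> norm (sstar - smod) \<le> \<epsilon> \<and>
       0 < \<alpha> \<and> \<alpha> \<le> \<alpha>max \<and> m * (\<delta> + \<epsilon>) \<le> \<alpha> \<and> \<alpha> \<le> M * (\<delta> + \<epsilon>) \<and>
       (\<forall>c s. Jfun B \<gamma> P scal w \<phi> p Rs u\<delta> smod \<alpha> (\<nu>1 * \<alpha>) (\<nu>2 * \<alpha>) (c\<alpha>, s\<alpha>)
              \<le> Jfun B \<gamma> P scal w \<phi> p Rs u\<delta> smod \<alpha> (\<nu>1 * \<alpha>) (\<nu>2 * \<alpha>) (c, s))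
       \<longrightarrow> norm (B c\<alpha> s\<alpha> - B cstar sstar) \<le> K * (\<delta> + \<epsilon>)
         \<and> bregman (Rtilde w \<phi> p P scal Rs \<nu>1 \<nu>2) (\<xi>c, \<xi>s) (c\<alpha>, s\<alpha>) (cstar, sstar)
             \<le> ereal (K * (\<delta> + \<epsilon>))"
    proof (intro allI impI)
      fix \<delta> \<epsilon> u\<delta> smod \<alpha> c\<alpha> s\<alpha>
      assume H: "0 \<le> \<delta> \<and> 0 \<le> \<epsilon> \<and> \<delta> + \<epsilon> < 1 \<and>
       norm (ustar - u\<delta>) \<le> \<delta> \<and> norm (sstar - smod) \<le> \<epsilon> \<and>
       0 < \<alpha> \<and> \<alpha> \<le> \<alpha>max \<and> m * (\<delta> + \<epsilon>) \<le> \<alpha> \<and> \<alpha> \<le> M * (\<delta> + \<epsilon>) \<and>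
       (\<forall>c s. Jfun B \<gamma> P scal w \<phi> p Rs u\<delta> smod \<alpha> (\<nu>1 * \<alpha>) (\<nu>2 * \<alpha>) (c\<alpha>, s\<alpha>)
              \<le> Jfun B \<gamma> P scal w \<phi> p Rs u\<delta> smod \<alpha> (\<nu>1 * \<alpha>) (\<nu>2 * \<alpha>) (c, s))"
      define J where "J = Jfun B \<gamma> P scal w \<phi> p Rs u\<delta> smod \<alpha> (\<nu>1 * \<alpha>) (\<nu>2 * \<alpha>)"
      have d0: "0 \<le> \<delta>" and e0: "0 \<le> \<epsilon>" and t1: "\<delta> + \<epsilon> < 1"
        and ud: "norm (ustar - u\<delta>) \<le> \<delta>" and sm: "norm (sstar - smod) \<le> \<epsilon>"
        and a0: "0 < \<alpha>" and am: "m * (\<delta> + \<epsilon>) \<le> \<alpha>" and aM: "\<alpha> \<le> M * (\<delta> + \<epsilon>)"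
        using H by auto
      have minim: "J (c\<alpha>, s\<alpha>) \<le> J (cstar, sstar)" using H unfolding J_def by blast
      define t where "t = \<delta> + \<epsilon>"
      have t0: "0 < t"
      proof (rule ccontr)
        assume "\<not> 0 < t"
        then have "M * t \<le> 0" using m_pos m_le_M by (simp add: mult_nonneg_nonpos)
        then show False using a0 aM unfolding t_def by linarith
      qed
      have dt: "\<delta> \<le> t" and et: "\<epsilon> \<le> t" unfolding t_def using d0 e0 by auto
      have Jstar: "J (cstar, sstar) = ereal (1/2 * (norm (B cstar sstar - u\<delta>))\<^sup>2
          + \<gamma>/2 * (norm (sstar - smod))\<^sup>2 + \<nu>2 * \<alpha> / 2 * (norm (P sstar - scal))\<^sup>2
          + \<alpha> * \<phi>s + \<nu>1 * \<alpha> * Rs sstar)"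
        unfolding J_def Jfun_def using phis by simp
      have Phia_fin: "Phi w \<phi> p c\<alpha> \<noteq> \<infinity>"
      proof
        assume inf: "Phi w \<phi> p c\<alpha> = \<infinity>"
        have "J (c\<alpha>, s\<alpha>) = \<infinity>" unfolding J_def Jfun_def using inf a0 by simp
        then show False using minim Jstar by simp
      qed
      have Phia0: "0 \<le> Phi w \<phi> p c\<alpha>" by (rule Phi_nonneg[OF w_ge1])
      obtain \<phi>a where phia: "Phi w \<phi> p c\<alpha> = ereal \<phi>a"
        using Phia_fin Phia0 by (cases "Phi w \<phi> p c\<alpha>") auto
      have phia0: "0 \<le> \<phi>a" using Phia0 phia by simp
      define Ra where "Ra = \<phi>a + \<nu>2/2 * (norm (P s\<alpha> - scal))\<^sup>2 + \<nu>1 * Rs s\<alpha>"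
      have Rta: "?R (c\<alpha>,s\<alpha>) = ereal Ra" unfolding Rtilde_def Ra_def using phia by simp
      have Ja: "J (c\<alpha>, s\<alpha>) = ereal (1/2 * (norm (B c\<alpha> s\<alpha> - u\<delta>))\<^sup>2
          + \<gamma>/2 * (norm (s\<alpha> - smod))\<^sup>2 + \<nu>2 * \<alpha> / 2 * (norm (P s\<alpha> - scal))\<^sup>2
          + \<alpha> * \<phi>a + \<nu>1 * \<alpha> * Rs s\<alpha>)"
        unfolding J_def Jfun_def using phia by simp
      have E0: "1/2 * (norm (B c\<alpha> s\<alpha> - u\<delta>))\<^sup>2
          + \<gamma>/2 * (norm (s\<alpha> - smod))\<^sup>2 + \<nu>2 * \<alpha> / 2 * (norm (P s\<alpha> - scal))\<^sup>2
          + \<alpha> * \<phi>a + \<nu>1 * \<alpha> * Rs s\<alpha> \<le> 1/2 * (norm (B cstar sstar - u\<delta>))\<^sup>2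
          + \<gamma>/2 * (norm (sstar - smod))\<^sup>2 + \<nu>2 * \<alpha> / 2 * (norm (P sstar - scal))\<^sup>2
          + \<alpha> * \<phi>s + \<nu>1 * \<alpha> * Rs sstar"
        using minim Ja Jstar by simp
      have E1: "1/2 * (norm (B c\<alpha> s\<alpha> - u\<delta>))\<^sup>2 + \<gamma>/2 * (norm (s\<alpha> - smod))\<^sup>2 + \<alpha> * Ra
          \<le> 1/2 * (norm (B cstar sstar - u\<delta>))\<^sup>2 + \<gamma>/2 * (norm (sstar - smod))\<^sup>2 + \<alpha> * rs"
        using E0 unfolding Ra_def rs_def by (simp add: algebra_simps)
      have nv: "norm (B cstar sstar - u\<delta>) \<le> \<delta>" using ud ustar_def by (simp add: norm_minus_commute)
      have nv2: "(norm (B cstar sstar - u\<delta>))\<^sup>2 \<le> \<delta>\<^sup>2" using nv by (intro power_mono) auto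
      have nz2: "(norm (sstar - smod))\<^sup>2 \<le> \<epsilon>\<^sup>2" using sm by (intro power_mono) auto
      have d2: "\<delta>\<^sup>2 \<le> t\<^sup>2" using dt d0 by (intro power_mono) auto
      have e2: "\<epsilon>\<^sup>2 \<le> t\<^sup>2" using et e0 by (intro power_mono) auto
      have Rs_a: "0 \<le> \<nu>1 * Rs s\<alpha>" using \<nu>1_pos Rs_nonneg by simp
      have Rs_b: "0 \<le> \<nu>2/2 * (norm (P s\<alpha> - scal))\<^sup>2" using \<nu>2_pos by simp
      have Ra_ge: "\<phi>a \<le> Ra" unfolding Ra_def using Rs_a Rs_b by linarith
      have "\<alpha> * \<phi>a \<le> \<alpha> * Ra" using Ra_ge a0 by simp
      moreover have "0 \<le> \<gamma>/2 * (norm (s\<alpha> - smod))\<^sup>2" using \<gamma>_pos by simp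
      moreover have "0 \<le> 1/2 * (norm (B c\<alpha> s\<alpha> - u\<delta>))\<^sup>2" by simp
      moreover have "\<gamma>/2 * (norm (sstar - smod))\<^sup>2 \<le> \<gamma>/2 * t\<^sup>2" using nz2 e2 \<gamma>_pos by simp
      moreover have "1/2 * (norm (B cstar sstar - u\<delta>))\<^sup>2 \<le> 1/2 * t\<^sup>2" using nv2 d2 by simp
      ultimately have "\<alpha> * \<phi>a \<le> 1/2 * t\<^sup>2 + \<gamma>/2 * t\<^sup>2 + \<alpha> * rs" using E1 by linarith
      moreover have "t\<^sup>2 \<le> \<alpha> / m"
      proof -
        have "t\<^sup>2 \<le> t" using t0 t1 unfolding t_def power2_eq_square
          by (simp add: mult_le_cancel_right1)
        moreover have "t \<le> \<alpha> / m" using am m_pos unfolding t_def by (simp add: pos_le_divide_eq mult.commute)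
        ultimately show ?thesis by linarith
      qed
      moreover have "1/2 * t\<^sup>2 + \<gamma>/2 * t\<^sup>2 = (1+\<gamma>)/2 * t\<^sup>2" by (simp add: algebra_simps)
      moreover have "(1+\<gamma>)/2 * t\<^sup>2 \<le> (1+\<gamma>)/2 * (\<alpha> / m)"
        using \<gamma>_pos calculation(2) by (intro mult_left_mono) auto
      ultimately have "\<alpha> * \<phi>a \<le> (1+\<gamma>)/2 * (\<alpha> / m) + \<alpha> * rs" by linarith
      then have "\<alpha> * \<phi>a \<le> \<alpha> * Qb" unfolding Qb_def using m_pos by (simp add: algebra_simps)
      then have phiaQ: "\<phi>a \<le> Qb" using a0 by simp
      have caL: "norm c\<alpha> \<le> L" by (rule normL[OF phia phiaQ])
      define x where "x = c\<alpha> - cstar"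
      define y where "y = s\<alpha> - sstar"
      have nx: "norm x \<le> 2 * L" unfolding x_def using norm_triangle_ineq4[of c\<alpha> cstar] caL cstarL by linarith
      have "?R (cstar,sstar) + ereal (inner (\<xi>c,\<xi>s) ((c\<alpha>,s\<alpha>) - (cstar,sstar))) \<le> ?R (c\<alpha>,s\<alpha>)"
        by (rule sdi)
      then have sg: "rs + (inner \<xi>c x + inner \<xi>s y) \<le> Ra" using Rts Rta unfolding x_def y_def by simp
      define D where "D = Ra - rs - (inner \<xi>c x + inner \<xi>s y)"
      have D0: "0 \<le> D" unfolding D_def using sg by linarith
      have breg: "bregman ?R (\<xi>c, \<xi>s) (c\<alpha>, s\<alpha>) (cstar, sstar) = ereal D"
        unfolding bregman_def D_def using Rts Rta by (simp add: x_def y_def)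
      define e where "e = B c\<alpha> s\<alpha> - B cstar sstar"
      have b1: "B x y = B c\<alpha> y - B cstar y" unfolding x_def by (rule bilinear_lsub[OF B_bilinear])
      have b2: "B c\<alpha> y = B c\<alpha> s\<alpha> - B c\<alpha> sstar" unfolding y_def by (rule bilinear_rsub[OF B_bilinear])
      have b3: "B x sstar = B c\<alpha> sstar - B cstar sstar" unfolding x_def by (rule bilinear_lsub[OF B_bilinear])
      have "B cstar y + B x sstar + B x y = B cstar y + (B c\<alpha> sstar - B cstar sstar) + (B c\<alpha> y - B cstar y)"
        using b1 b3 by simp
      also have "\<dots> = B c\<alpha> sstar + B c\<alpha> y - B cstar sstar" by (simp add: algebra_simps)
      also have "\<dots> = e" unfolding e_def using b2 by (simp add: algebra_simps)
      finally have eid: "B cstar y + B x sstar = e - B x y" by (simp add: eq_diff_eq)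
      have src: "inner \<xi>c x + inner \<xi>s y = inner \<omega> e - inner \<omega> (B x y)"
        using source eid by (simp add: inner_diff_right)
      define v where "v = B cstar sstar - u\<delta>"
      define z where "z = sstar - smod"
      have ev: "B c\<alpha> s\<alpha> - u\<delta> = e + v" unfolding e_def v_def by simp
      have yz: "s\<alpha> - smod = y + z" unfolding y_def z_def by simp
      have RaD: "Ra = D + rs + inner \<omega> e - inner \<omega> (B x y)" unfolding D_def using src by simp
      define nev where "nev = (norm (e + v))\<^sup>2"
      define nyz where "nyz = (norm (y + z))\<^sup>2"
      define nv where "nv = (norm v)\<^sup>2"
      define nz where "nz = (norm z)\<^sup>2"
      define Ae where "Ae = inner \<omega> e"
      define Ab where "Ab = inner \<omega> (B x y)"
      have id1: "1/2 * (norm (B c\<alpha> s\<alpha> - u\<delta>))\<^sup>2 + \<gamma>/2 * (norm (s\<alpha> - smod))\<^sup>2 + \<alpha> * Ra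
          = nev/2 + \<gamma>*nyz/2 + \<alpha>*D + \<alpha>*Ae - \<alpha>*Ab + \<alpha>*rs"
        unfolding ev yz RaD nev_def nyz_def Ae_def Ab_def by (simp add: algebra_simps)
      have id2: "1/2 * (norm (B cstar sstar - u\<delta>))\<^sup>2 + \<gamma>/2 * (norm (sstar - smod))\<^sup>2 + \<alpha> * rs
          = nv/2 + \<gamma>*nz/2 + \<alpha>*rs"
        unfolding nv_def nz_def v_def z_def by (simp add: algebra_simps)
      have E2: "nev/2 + \<gamma>*nyz/2 + \<alpha>*D + \<alpha>*Ae - \<alpha>*Ab \<le> nv/2 + \<gamma>*nz/2"
        using E1 id1 id2 by linarith
      define Ne where "Ne = norm e"
      define Ny where "Ny = norm y"
      have Ne0: "0 \<le> Ne" and Ny0: "0 \<le> Ny" unfolding Ne_def Ny_def by simp_all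
      have nvd: "norm v \<le> \<delta>" using nv unfolding v_def .
      have nzd: "norm z \<le> \<epsilon>" using sm unfolding z_def .
      have f1: "Ne\<^sup>2 - Ne * \<delta> * 2 \<le> nev"
      proof -
        have "Ne * norm v \<le> Ne * \<delta>" using nvd Ne0 by (simp add: mult_left_mono)
        then show ?thesis using sq_add_ge[of e v] unfolding Ne_def nev_def by linarith
      qed
      have f2: "Ny\<^sup>2 - Ny * \<epsilon> * 2 \<le> nyz"
      proof -
        have "Ny * norm z \<le> Ny * \<epsilon>" using nzd Ny0 by (simp add: mult_left_mono)
        then show ?thesis using sq_add_ge[of y z] unfolding Ny_def nyz_def by linarith
      qed
      have f3: "- (W * Ne) \<le> Ae"
        using Cauchy_Schwarz_ineq2[of \<omega> e] unfolding W_def Ne_def Ae_def by linarith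
      have f4: "Ab \<le> W * (C * (2 * L) * Ny)"
      proof -
        have "inner \<omega> (B x y) \<le> W * norm (B x y)"
          using Cauchy_Schwarz_ineq2[of \<omega> "B x y"] unfolding W_def by linarith
        also have "\<dots> \<le> W * (C * norm x * norm y)" using B_bound W0 by (simp add: mult_left_mono)
        also have "\<dots> \<le> W * (C * (2 * L) * Ny)" unfolding Ny_def
          using nx W0 C_pos by (intro mult_left_mono mult_right_mono) auto
        finally show ?thesis unfolding Ab_def .
      qed
      have nv2': "nv \<le> \<delta>\<^sup>2" unfolding nv_def using nvd by (intro power_mono) auto
      have nz2': "nz \<le> \<epsilon>\<^sup>2" unfolding nz_def using nzd by (intro power_mono) auto
      have g1a: "\<gamma> * (Ny\<^sup>2 - Ny * \<epsilon> * 2) \<le> \<gamma> * nyz" using mult_left_mono[OF f2, of \<gamma>] \<gamma>_pos by simp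
      have g1b: "\<gamma> * (Ny\<^sup>2 - Ny * \<epsilon> * 2) = \<gamma> * Ny\<^sup>2 - \<gamma> * Ny * \<epsilon> * 2" by (simp add: algebra_simps)
      have g2a: "\<alpha> * (- (W * Ne)) \<le> \<alpha> * Ae" using mult_left_mono[OF f3, of \<alpha>] a0 by simp
      have g2b: "\<alpha> * (- (W * Ne)) = - (\<alpha> * W * Ne)" by (simp add: algebra_simps)
      have g3a: "\<alpha> * Ab \<le> \<alpha> * (W * (C * (2 * L) * Ny))" using mult_left_mono[OF f4, of \<alpha>] a0 by simp
      have g3b: "\<alpha> * (W * (C * (2 * L) * Ny)) = \<alpha> * W * C * L * Ny * 2" by (simp add: algebra_simps)
      have g4: "\<gamma> * nz \<le> \<gamma> * \<epsilon>\<^sup>2" using mult_left_mono[OF nz2', of \<gamma>] \<gamma>_pos by simp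
      have G': "Ne\<^sup>2/2 - Ne*\<delta> - \<alpha> * W * Ne + \<gamma> * Ny\<^sup>2/2 - \<gamma> * Ny * \<epsilon> + \<alpha>*D
          \<le> \<delta>\<^sup>2/2 + \<gamma> * \<epsilon>\<^sup>2/2 + \<alpha> * W * C * L * Ny * 2"
        using E2 f1 g1a g1b g2a g2b g3a g3b g4 nv2' by linarith
      have h1: "Ne * (\<delta> + \<alpha> * W) \<le> Ne\<^sup>2 / 4 + (\<delta> + \<alpha> * W)\<^sup>2" by (rule ab_le)
      have h1': "Ne * (\<delta> + \<alpha> * W) = Ne*\<delta> + \<alpha> * W * Ne" by (simp add: algebra_simps)
      have h2: "Ny * (\<gamma> * \<epsilon>) \<le> \<gamma> * Ny\<^sup>2 / 8 + 2 * (\<gamma> * \<epsilon>)\<^sup>2 / \<gamma>" by (rule ab_le_g[OF \<gamma>_pos])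
      have h2': "2 * (\<gamma> * \<epsilon>)\<^sup>2 / \<gamma> = \<gamma> * \<epsilon>\<^sup>2 * 2" using \<gamma>_pos by (simp add: power2_eq_square)
      have h2'': "Ny * (\<gamma> * \<epsilon>) = \<gamma> * Ny * \<epsilon>" by (simp add: algebra_simps)
      have h3: "Ny * (2 * \<alpha> * W * C * L) \<le> \<gamma> * Ny\<^sup>2 / 8 + 2 * (2 * \<alpha> * W * C * L)\<^sup>2 / \<gamma>"
        by (rule ab_le_g[OF \<gamma>_pos])
      have h3': "2 * (2 * \<alpha> * W * C * L)\<^sup>2 / \<gamma> = (\<alpha> * W * C * L)\<^sup>2 / \<gamma> * 8"
        by (simp add: power2_eq_square)
      have h3'': "Ny * (2 * \<alpha> * W * C * L) = \<alpha> * W * C * L * Ny * 2" by (simp add: algebra_simps)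
      have Mx: "Ne\<^sup>2 / 4 + \<gamma> * Ny\<^sup>2 / 4 + \<alpha> * D \<le>
          \<delta>\<^sup>2 / 2 + \<gamma> * \<epsilon>\<^sup>2 * 5 / 2 + (\<delta> + \<alpha> * W)\<^sup>2 + (\<alpha> * W * C * L)\<^sup>2 / \<gamma> * 8"
        using G' h1 h1' h2 h2' h2'' h3 h3' h3'' by linarith
      have aWt: "\<alpha> * W \<le> M * t * W" using aM W0 unfolding t_def by (intro mult_right_mono) auto
      have k1: "(\<delta> + \<alpha> * W)\<^sup>2 \<le> (1 + M*W)\<^sup>2 * t\<^sup>2"
      proof -
        have "0 \<le> \<delta> + \<alpha> * W" using d0 a0 W0 by simp
        moreover have "\<delta> + \<alpha> * W \<le> (1 + M*W) * t" using dt aWt by (simp add: algebra_simps)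
        ultimately have "(\<delta> + \<alpha> * W)\<^sup>2 \<le> ((1 + M*W) * t)\<^sup>2" by (intro power_mono) auto
        then show ?thesis by (simp add: power_mult_distrib)
      qed
      have k2: "(\<alpha> * W * C * L)\<^sup>2 / \<gamma> \<le> (M*W*C*L)\<^sup>2 * t\<^sup>2 / \<gamma>"
      proof -
        have WCL: "0 \<le> W * C * L" using W0 C_pos L0 by simp
        have "0 \<le> \<alpha> * W * C * L" using a0 WCL by (simp add: mult.assoc)
        moreover have "\<alpha> * W * C * L \<le> (M*W*C*L) * t"
          using mult_right_mono[OF aM WCL] unfolding t_def by (simp add: algebra_simps)
        ultimately have "(\<alpha> * W * C * L)\<^sup>2 \<le> ((M*W*C*L) * t)\<^sup>2" by (intro power_mono) auto
        then show ?thesis using \<gamma>_pos by (simp add: power_mult_distrib divide_right_mono)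
      qed
      have k3: "\<gamma> * \<epsilon>\<^sup>2 \<le> \<gamma> * t\<^sup>2" using mult_left_mono[OF e2, of \<gamma>] \<gamma>_pos by simp
      have k2': "(\<alpha> * W * C * L)\<^sup>2 / \<gamma> * 8 \<le> (M*W*C*L)\<^sup>2 * t\<^sup>2 / \<gamma> * 8" using mult_right_mono[OF k2, of 8] by simp
      have K0t: "K0 * t\<^sup>2 = t\<^sup>2/2 + \<gamma> * t\<^sup>2 * 5/2 + (1 + M*W)\<^sup>2 * t\<^sup>2 + (M*W*C*L)\<^sup>2 * t\<^sup>2 / \<gamma> * 8"
        unfolding K0_def by (simp add: algebra_simps add_divide_distrib)
      have Mf: "Ne\<^sup>2 / 4 + \<gamma> * Ny\<^sup>2 / 4 + \<alpha> * D \<le> K0 * t\<^sup>2"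
        using Mx k1 k2' k3 d2 K0t by linarith
      have gny: "0 \<le> \<gamma> * Ny\<^sup>2" using \<gamma>_pos by simp
      have aD: "0 \<le> \<alpha> * D" using a0 D0 by simp
      have Ne2: "Ne\<^sup>2 \<le> K0 * t\<^sup>2 * 4" using Mf gny aD by linarith
      have aDK: "\<alpha> * D \<le> K0 * t\<^sup>2" using Mf gny zero_le_power2[of Ne] by linarith
      have K1: "1 \<le> K" unfolding K_def using K00 m_pos by simp
      have KK: "4 * K0 \<le> K * K"
      proof -
        have "4 * K0 \<le> K" unfolding K_def using K00 m_pos by simp
        also have "K \<le> K * K" using K1 by (simp add: mult_le_cancel_left1)
        finally show ?thesis .
      qed
      have part1: "norm (B c\<alpha> s\<alpha> - B cstar sstar) \<le> K * (\<delta> + \<epsilon>)"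
      proof -
        have "4 * K0 * t\<^sup>2 \<le> (K * K) * t\<^sup>2" using KK by (intro mult_right_mono) auto
        moreover have "4 * K0 * t\<^sup>2 = K0 * t\<^sup>2 * 4" by simp
        moreover have "(K * K) * t\<^sup>2 = (K * t)\<^sup>2" by (simp add: power2_eq_square)
        ultimately have "Ne\<^sup>2 \<le> (K * t)\<^sup>2" using Ne2 by linarith
        moreover have "0 \<le> K * t" using K1 t0 by simp
        ultimately have "Ne \<le> K * t" by (rule power2_le_imp_le)
        then show ?thesis unfolding Ne_def e_def t_def .
      qed
      have part2: "D \<le> K * (\<delta> + \<epsilon>)"
      proof -
        have "(m * t) * D \<le> \<alpha> * D" using am D0 unfolding t_def by (intro mult_right_mono) auto
        moreover have "(m * t) * D = (m * D) * t" by simp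
        moreover have "K0 * t\<^sup>2 = (K0 * t) * t" by (simp add: power2_eq_square)
        ultimately have "(m * D) * t \<le> (K0 * t) * t" using aDK by linarith
        then have "m * D \<le> K0 * t" using t0 by simp
        then have "D \<le> (K0 / m) * t" using m_pos by (simp add: field_simps)
        also have "\<dots> \<le> K * t" unfolding K_def using K00 m_pos t0 by (intro mult_right_mono) auto
        finally show ?thesis unfolding t_def .
      qed
      show "norm (B c\<alpha> s\<alpha> - B cstar sstar) \<le> K * (\<delta> + \<epsilon>)
         \<and> bregman (Rtilde w \<phi> p P scal Rs \<nu>1 \<nu>2) (\<xi>c, \<xi>s) (c\<alpha>, s\<alpha>) (cstar, sstar)
             \<le> ereal (K * (\<delta> + \<epsilon>))"
        using part1 part2 breg by simp
    qed
  qed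
qed

end
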